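(* There exist $\mu_\lambda\in\overline{\mathbb Q}$ $(\lambda\in\Lambda)$ with $\mu_\lambda^3=\lambda$ such that $\sum_{\lambda\in\Lambda}c_\lambda\mu_\lambda=0$. Likewise, there exist $\eta_\lambda\in\overline{\mathbb Q}$ $(\lambda\in\Lambda)$ with $\eta_\lambda^3=\lambda$ such that $\sum_{\lambda\in\Lambda}c_\lambda\eta_\lambda^{-5}=0$.
   Context: $\Lambda=\{\lambda_1,\lambda_2,\lambda_3\}\subset\overline{\mathbb Q}$ is the set of roots of $P(X)=X^3-X^2-X-1$, and $c_\lambda=\lambda P'(\lambda)^{-1}$ for $\lambda\in\Lambda$ (so that the Tribonacci numbers are $T(n)=\sum_{\lambda\in\Lambda}c_\lambda\lambda^n$). *)

theory Defs
  imports "HOL-Computational_Algebra.Polynomial" Complex_Main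
begin

text \<open>Tribonacci characteristic polynomial P(X) = X^3 - X^2 - X - 1 over the complex numbers;
  the algebraic closure of Q is realised as the algebraic complex numbers.\<close>
definition tribP :: "complex poly" where
  "tribP = [:-1, -1, -1, 1:]"

definition Lambda :: "complex set" where
  "Lambda = {z. poly tribP z = 0}"

definition cc :: "complex \<Rightarrow> complex" where
  "cc l = l / poly (pderiv tribP) l"

end

theory Submission
  imports Defs "HOL-Computational_Algebra.Fundamental_Theorem_Algebra"
begin

lemma polyP: "poly tribP z = z^3 - z^2 - z - 1"
  by (simp add: tribP_def algebra_simps power2_eq_square power3_eq_cube)

lemma polyP': "poly (pderiv tribP) z = 3*z^2 - 2*z - 1"
  by (simp add: tribP_def pderiv_pCons algebra_simps power2_eq_square)

lemma no_double: fixes a :: complex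
  assumes "a^3 - a^2 - a - 1 = 0" "3*a^2 - 2*a - 1 = 0" shows False
proof -
  have h1: "a^2 = -2*a - 3" using assms by algebra
  have "a = -5/4" using assms h1 by algebra
  with h1 show False by (simp add: power2_eq_square)
qed

lemma roots3: "\<exists>a b c. a \<noteq> b \<and> a \<noteq> c \<and> b \<noteq> c \<and>
   (\<forall>z. poly tribP z = (z-a)*(z-b)*(z-c)) \<and>
   (\<forall>z. poly (pderiv tribP) z = (z-a)*(z-b) + (z-a)*(z-c) + (z-b)*(z-c))"
proof -
  have "\<exists>z. poly tribP z = 0"
    by (rule fundamental_theorem_of_algebra_alt) (simp add: tribP_def)
  then obtain a where "poly tribP a = 0" by blast
  then have a: "a^3 - a^2 - a - 1 = 0" by (simp add: polyP)
  define s where "s = csqrt ((a-1)^2 - 4*(a^2-a-1))"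
  have s2: "s^2 = (a-1)^2 - 4*(a^2-a-1)" by (simp add: s_def)
  define b where "b = (-(a-1) + s)/2"
  define c where "c = (-(a-1) - s)/2"
  have fac: "\<forall>z. poly tribP z = (z-a)*(z-b)*(z-c)"
  proof
    fix z
    have "(z-b)*(z-c) = z^2 + (a-1)*z + (a^2-a-1)"
      unfolding b_def c_def using s2 by (simp add: field_simps power2_eq_square)
    then show "poly tribP z = (z-a)*(z-b)*(z-c)"
      using a by (simp add: polyP mult.assoc) algebra
  qed
  have d: "poly (pderiv tribP) z = (z-a)*(z-b) + (z-a)*(z-c) + (z-b)*(z-c)" for z
  proof -
    have e1: "a+b+c = 1" and e2: "a*b+b*c+c*a = -1" and e3: "a*b*c = 1"
    proof -
      have f0: "poly tribP 0 = (0-a)*(0-b)*(0-c)" using fac by blast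
      have f1: "poly tribP 1 = (1-a)*(1-b)*(1-c)" using fac by blast
      have f2: "poly tribP (-1) = (-1-a)*(-1-b)*(-1-c)" using fac by blast
      from f0 have g0: "a*b*c = 1" by (simp add: polyP)
      from f1 have g1: "(1-a)*(1-b)*(1-c) = -2" by (simp add: polyP)
      from f2 have g2: "(-1-a)*(-1-b)*(-1-c) = -2" by (simp add: polyP)
      show "a*b*c = 1" by (fact g0)
      show "a+b+c = 1" using g0 g1 g2 by algebra
      show "a*b+b*c+c*a = -1" using g0 g1 g2 by algebra
    qed
    show ?thesis using e1 e2 e3 by (simp add: polyP') algebra
  qed
  have "a \<noteq> b \<and> a \<noteq> c \<and> b \<noteq> c"
  proof -
    have r: "x^3 - x^2 - x - 1 = 0" if "x = a \<or> x = b \<or> x = c" for x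
      using fac[rule_format, of x] that by (auto simp: polyP)
    show ?thesis
    proof (intro conjI notI)
      assume "a = b"
      then have "poly (pderiv tribP) a = 0" using d[of a] by simp
      then show False using no_double[of a] r[of a] by (simp add: polyP')
    next
      assume "a = c"
      then have "poly (pderiv tribP) a = 0" using d[of a] by simp
      then show False using no_double[of a] r[of a] by (simp add: polyP')
    next
      assume "b = c"
      then have "poly (pderiv tribP) b = 0" using d[of b] by simp
      then show False using no_double[of b] r[of b] by (simp add: polyP')
    qed
  qed
  with fac d show ?thesis by blast
qed

lemma sum3: fixes a b c :: complex
  assumes "a \<noteq> b" "a \<noteq> c" "b \<noteq> c"
  shows "(a+k)/((a-b)*(a-c)) + (b+k)/((b-a)*(b-c)) + (c+k)/((c-a)*(c-b)) = 0"
proof -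
  have nz: "b - c \<noteq> 0" "a - c \<noteq> 0" "a - b \<noteq> 0"
    using assms by auto
  have nz2: "b - a \<noteq> 0" "c - a \<noteq> 0" "c - b \<noteq> 0"
    using assms by auto
  define D where "D = (a-b)*(a-c)*(b-c)"
  have 1: "(a+k)/((a-b)*(a-c)) = (a+k)*(b-c)/D" unfolding D_def using nz by simp
  have 2: "(b+k)/((b-a)*(b-c)) = -((b+k)*(a-c))/D" unfolding D_def using nz
    by (subst frac_eq_eq) (use nz nz2 in simp, use nz nz2 in simp, algebra)
  have 3: "(c+k)/((c-a)*(c-b)) = (c+k)*(a-b)/D" unfolding D_def using nz
    by (subst frac_eq_eq) (use nz nz2 in simp, use nz nz2 in simp, algebra)
  have "(a+k)*(b-c) + -((b+k)*(a-c)) + (c+k)*(a-b) = 0" by algebra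
  moreover have "(a+k)/((a-b)*(a-c)) + (b+k)/((b-a)*(b-c)) + (c+k)/((c-a)*(c-b))
     = ((a+k)*(b-c) + -((b+k)*(a-c)) + (c+k)*(a-b)) / D"
    unfolding 1 2 3 by (simp only: add_divide_distrib)
  ultimately show ?thesis by simp
qed

theorem mainTheorem5:
  shows "(\<exists>\<mu> :: complex \<Rightarrow> complex.
            (\<forall>l\<in>Lambda. algebraic (\<mu> l) \<and> (\<mu> l) ^ 3 = l) \<and>
            (\<Sum>l\<in>Lambda. cc l * \<mu> l) = 0)
       \<and> (\<exists>\<eta> :: complex \<Rightarrow> complex.
            (\<forall>l\<in>Lambda. algebraic (\<eta> l) \<and> (\<eta> l) ^ 3 = l) \<and>
            (\<Sum>l\<in>Lambda. cc l * inverse ((\<eta> l) ^ 5)) = 0)"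
proof -
  obtain a b c where ab: "a \<noteq> b" and ac: "a \<noteq> c" and bc: "b \<noteq> c"
    and fac: "\<And>z. poly tribP z = (z-a)*(z-b)*(z-c)"
    and d: "\<And>z. poly (pderiv tribP) z = (z-a)*(z-b) + (z-a)*(z-c) + (z-b)*(z-c)"
    using roots3 by blast
  have L: "Lambda = {a,b,c}" unfolding Lambda_def using fac by auto
  define t :: complex where "t = of_real (root 3 2)"
  have t3: "t^3 = 2" unfolding t_def by (simp flip: of_real_power)
  have t0: "t \<noteq> 0" using t3 by auto
  define \<mu> where "\<mu> = (\<lambda>l::complex. (l^2 - l) / t)"
  have lr: "l^3 - l^2 - l - 1 = 0" if "l \<in> Lambda" for l
    using that by (simp add: Lambda_def polyP)
  have l0: "l \<noteq> 0" if "l \<in> Lambda" for l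
    using lr[OF that] by auto
  have cube: "(\<mu> l)^3 = l" if "l \<in> Lambda" for l
  proof -
    have "(l^2 - l)^3 = 2*l" using lr[OF that] by algebra
    then show ?thesis unfolding \<mu>_def using t3 by (simp add: power_divide)
  qed
  have alg: "algebraic (\<mu> l)" if "l \<in> Lambda" for l
  proof (rule algebraicI[of "[:-1,0,0,-1,0,0,-1,0,0,1:]"])
    fix i show "coeff [:-1,0,0,-1,0,0,-1,0,0,1:] i \<in> \<int>"
      by (simp add: coeff_pCons split: nat.split)
  next
    show "[:-1,0,0,-1,0,0,-1,0,0,1:] \<noteq> (0::complex poly)" by simp
  next
    have e: "(\<mu> l)^9 = l^3" "(\<mu> l)^6 = l^2"
      using power_mult[of "\<mu> l" 3 3] power_mult[of "\<mu> l" 3 2] cube[OF that] by simp_all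
    show "poly [:-1,0,0,-1,0,0,-1,0,0,1:] (\<mu> l) = 0"
      using lr[OF that] cube[OF that] e by (simp add: algebra_simps) algebra
  qed
  have dA: "poly (pderiv tribP) a = (a-b)*(a-c)" "poly (pderiv tribP) b = (b-a)*(b-c)"
    "poly (pderiv tribP) c = (c-a)*(c-b)" by (simp only: d; algebra)+
  have t1: "cc l * \<mu> l = (l+1)/poly (pderiv tribP) l / t" if "l \<in> Lambda" for l
  proof -
    have "l * (l^2 - l) = l + 1" using lr[OF that] by algebra
    then show ?thesis unfolding cc_def \<mu>_def by (simp add: field_simps)
  qed
  have t2: "cc l * inverse ((\<mu> l)^5) = (l + (-1))/poly (pderiv tribP) l / t" if "l \<in> Lambda" for l
  proof -
    have m6: "(\<mu> l)^6 = l^2"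
      using power_mult[of "\<mu> l" 3 2] cube[OF that] by simp
    have m0: "\<mu> l \<noteq> 0" using cube[OF that] l0[OF that] by auto
    have "inverse ((\<mu> l)^5) = \<mu> l / l^2"
      using m6 m0 l0[OF that] by (simp add: field_simps) (metis power_Suc numeral_nat)
    moreover have q: "l*(l^2-l) = (l-1)*l^2" by algebra
    ultimately have "cc l * inverse ((\<mu> l)^5) = (l*(l^2-l)) / (poly (pderiv tribP) l * t * l^2)"
      unfolding cc_def \<mu>_def by simp
    also have "\<dots> = ((l-1)*l^2) / ((poly (pderiv tribP) l * t) * l^2)" by (simp only: q mult.assoc)
    also have "\<dots> = (l-1) / (poly (pderiv tribP) l * t)"
      using l0[OF that] by (rule mult_divide_mult_cancel_right[OF power_not_zero])
    finally show ?thesis by simp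
  qed
  have s1: "(\<Sum>l\<in>Lambda. cc l * \<mu> l) = 0"
  proof -
    have "(\<Sum>l\<in>Lambda. cc l * \<mu> l) = (\<Sum>l\<in>Lambda. (l+1)/poly (pderiv tribP) l / t)"
      using t1 by (rule sum.cong[OF refl])
    also have "\<dots> = ((a+1)/((a-b)*(a-c)) + (b+1)/((b-a)*(b-c)) + (c+1)/((c-a)*(c-b))) / t"
      using ab ac bc by (simp add: L dA add_divide_distrib)
    also have "\<dots> = 0" using sum3[OF ab ac bc, of 1] by simp
    finally show ?thesis .
  qed
  have s2: "(\<Sum>l\<in>Lambda. cc l * inverse ((\<mu> l)^5)) = 0"
  proof -
    have "(\<Sum>l\<in>Lambda. cc l * inverse ((\<mu> l)^5)) = (\<Sum>l\<in>Lambda. (l+(-1))/poly (pderiv tribP) l / t)"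
      using t2 by (rule sum.cong[OF refl])
    also have "\<dots> = ((a+(-1))/((a-b)*(a-c)) + (b+(-1))/((b-a)*(b-c)) + (c+(-1))/((c-a)*(c-b))) / t"
      using ab ac bc by (simp add: L dA add_divide_distrib del: add_uminus_conv_diff)
    also have "\<dots> = 0" using sum3[OF ab ac bc, of "-1"] by simp
    finally show ?thesis .
  qed
  show ?thesis using s1 s2 alg cube by blast
qed

end
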